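(* Let $(u_n)_{n\in\mathbb Z}$ be a 4-chain and $i\in\mathbb Z$. If $1<|u_i|<|u_{i+1}|$, then $|u_{i+2}|>|u_{i+1}|$. If $|u_i|>|u_{i+1}|>1$, then $|u_{i-1}|>|u_i|$. Consequently, if a 4-chain has no term of absolute value $1$ (and no two consecutive terms of equal absolute value), it has a unique term $u_0$ of least absolute value (after reindexing), and $\cdots>|u_{-2}|>|u_{-1}|>|u_0|<|u_1|<|u_2|<\cdots$.
   Context: A 4-chain is a bi-infinite sequence of integers $(u_n)_{n\in\mathbb Z}$ satisfying $u_{n-1}u_{n+1}=u_n^3+u_n^{f(n)}+1$ for all $n\in\mathbb Z$, where $f(n)=1$ if $n\equiv 0,3\pmod 4$ and $f(n)=2$ if $n\equiv 1,2\pmod 4$. *)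

theory Defs
  imports Main
begin

definition chain_exp :: "int \<Rightarrow> nat" where
  "chain_exp n = (if n mod 4 = 0 \<or> n mod 4 = 3 then 1 else 2)"

definition four_chain :: "(int \<Rightarrow> int) \<Rightarrow> bool" where
  "four_chain u \<longleftrightarrow> (\<forall>n. u (n - 1) * u (n + 1) = u n ^ 3 + u n ^ chain_exp n + 1)"

end

theory Submission
  imports Defs
begin

lemma key:
  fixes a b c :: int and e :: nat
  assumes eq: "a * c = b^3 + b^e + 1" and e: "e = 1 \<or> e = 2"
    and h1: "1 < \<bar>a\<bar>" and h2: "\<bar>a\<bar> < \<bar>b\<bar>"
  shows "\<bar>b\<bar> < \<bar>c\<bar>"
proof (rule ccontr)
  assume "\<not> \<bar>b\<bar> < \<bar>c\<bar>"
  hence hc: "\<bar>c\<bar> \<le> \<bar>b\<bar>" by simp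
  define B where "B = \<bar>b\<bar>"
  have B3: "B \<ge> 3" using h1 h2 B_def by simp
  have BB: "B \<le> B * B" using B3 by simp
  have be: "\<bar>b^e\<bar> \<le> B^2" using e B3 B_def BB by (auto simp: abs_power2 power2_eq_square abs_mult)
  have b3: "\<bar>b^3\<bar> = B^3" using B_def by (simp add: power_abs)
  have "\<bar>b^3 + b^e + 1\<bar> \<ge> \<bar>b^3\<bar> - \<bar>b^e\<bar> - 1" by linarith
  hence low: "\<bar>a * c\<bar> \<ge> B^3 - B^2 - 1" using eq b3 be by linarith
  have "\<bar>a * c\<bar> = \<bar>a\<bar> * \<bar>c\<bar>" by (simp add: abs_mult)
  also have "\<dots> \<le> (B - 1) * B" using h2 hc B_def
    by (intro mult_mono) auto
  finally have "B^3 - B^2 - 1 \<le> (B - 1) * B" using low by linarith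
  moreover have "B^3 \<ge> 3 * B^2" using B3 by (simp add: power2_eq_square power3_eq_cube)
  moreover have "B * B \<ge> 0" by simp
  ultimately show False using B3 by (simp add: power2_eq_square algebra_simps)
qed

lemma exp12: "chain_exp n = 1 \<or> chain_exp n = 2" by (simp add: chain_exp_def)

theorem mainTheorem9:
  fixes u :: "int \<Rightarrow> int"
  assumes "four_chain u"
  shows "(\<forall>i. 1 < \<bar>u i\<bar> \<and> \<bar>u i\<bar> < \<bar>u (i + 1)\<bar> \<longrightarrow> \<bar>u (i + 1)\<bar> < \<bar>u (i + 2)\<bar>)
       \<and> (\<forall>i. \<bar>u i\<bar> > \<bar>u (i + 1)\<bar> \<and> \<bar>u (i + 1)\<bar> > 1 \<longrightarrow> \<bar>u i\<bar> < \<bar>u (i - 1)\<bar>)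
       \<and> ((\<forall>n. \<bar>u n\<bar> \<noteq> 1) \<and> (\<forall>n. \<bar>u n\<bar> \<noteq> \<bar>u (n + 1)\<bar>) \<longrightarrow>
           (\<exists>!m. (\<forall>n. n \<noteq> m \<longrightarrow> \<bar>u m\<bar> < \<bar>u n\<bar>)
                 \<and> (\<forall>n. n < m \<longrightarrow> \<bar>u (n + 1)\<bar> < \<bar>u n\<bar>)
                 \<and> (\<forall>n. m \<le> n \<longrightarrow> \<bar>u n\<bar> < \<bar>u (n + 1)\<bar>)))"
proof -
  have rec: "\<And>n. u (n - 1) * u (n + 1) = u n ^ 3 + u n ^ chain_exp n + 1"
    using assms by (simp add: four_chain_def)
  have P1: "\<forall>i. 1 < \<bar>u i\<bar> \<and> \<bar>u i\<bar> < \<bar>u (i + 1)\<bar> \<longrightarrow> \<bar>u (i + 1)\<bar> < \<bar>u (i + 2)\<bar>"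
  proof (intro allI impI)
    fix i assume h: "1 < \<bar>u i\<bar> \<and> \<bar>u i\<bar> < \<bar>u (i + 1)\<bar>"
    have "u i * u (i + 2) = u (i+1) ^ 3 + u (i+1) ^ chain_exp (i+1) + 1"
      using rec[of "i+1"] by (simp add: add.assoc)
    then show "\<bar>u (i + 1)\<bar> < \<bar>u (i + 2)\<bar>" using key exp12 h by blast
  qed
  have P2: "\<forall>i. \<bar>u i\<bar> > \<bar>u (i + 1)\<bar> \<and> \<bar>u (i + 1)\<bar> > 1 \<longrightarrow> \<bar>u i\<bar> < \<bar>u (i - 1)\<bar>"
  proof (intro allI impI)
    fix i assume h: "\<bar>u i\<bar> > \<bar>u (i + 1)\<bar> \<and> \<bar>u (i + 1)\<bar> > 1"
    have "u (i+1) * u (i - 1) = u i ^ 3 + u i ^ chain_exp i + 1"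
      using rec[of i] by (simp add: mult.commute)
    then show "\<bar>u i\<bar> < \<bar>u (i - 1)\<bar>" using key exp12 h by blast
  qed
  have P3: "\<exists>!m. (\<forall>n. n \<noteq> m \<longrightarrow> \<bar>u m\<bar> < \<bar>u n\<bar>)
                 \<and> (\<forall>n. n < m \<longrightarrow> \<bar>u (n + 1)\<bar> < \<bar>u n\<bar>)
                 \<and> (\<forall>n. m \<le> n \<longrightarrow> \<bar>u n\<bar> < \<bar>u (n + 1)\<bar>)"
    if n1: "\<forall>n. \<bar>u n\<bar> \<noteq> 1" and ne: "\<forall>n. \<bar>u n\<bar> \<noteq> \<bar>u (n + 1)\<bar>"
  proof -
    have nz: "\<bar>u n\<bar> > 1" for n
    proof (rule ccontr)
      assume "\<not> \<bar>u n\<bar> > 1"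
      hence "u n = 0" using n1 by (metis abs_ge_zero abs_zero le_less not_less zero_less_abs_iff
          int_one_le_iff_zero_less)
      hence "u (n - 1) * u (n + 1) = 1" using rec[of n] by (simp add: chain_exp_def)
      hence "\<bar>u (n - 1)\<bar> = 1" using zero_less_mult_iff by (metis abs_mult abs_one pos_zmult_eq_1_iff
          zero_less_abs_iff zero_less_one mult_eq_0_iff zero_neq_one)
      thus False using n1 by blast
    qed
    define D where "D = {i. \<bar>u (i + 1)\<bar> < \<bar>u i\<bar>}"
    have notD: "i \<notin> D \<longleftrightarrow> \<bar>u i\<bar> < \<bar>u (i + 1)\<bar>" for i
      using ne[rule_format, of i] by (auto simp: D_def)
    have Ddown1: "i \<in> D \<Longrightarrow> i - 1 \<in> D" for i
      using P2 nz[of "i+1"] by (auto simp: D_def)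
    have Dup1: "i \<notin> D \<Longrightarrow> i + 1 \<notin> D" for i
      using P1[rule_format, of i] nz[of i] notD[of i] notD[of "i+1"] by (simp add: add.assoc)
    have Ddown: "i \<in> D \<Longrightarrow> i - int k \<in> D" for i k
    proof (induction k)
      case (Suc k)
      then have "i - int k - 1 \<in> D" using Ddown1 by blast
      then show ?case by (simp add: algebra_simps)
    qed simp
    have Dup: "i \<notin> D \<Longrightarrow> i + int k \<notin> D" for i k
    proof (induction k)
      case (Suc k)
      then have "i + int k + 1 \<notin> D" using Dup1 by blast
      then show ?case by (simp add: algebra_simps)
    qed simp
    have Ddown': "j \<in> D \<Longrightarrow> i \<le> j \<Longrightarrow> i \<in> D" for i j
      using Ddown[of j "nat (j - i)"] by simp
    have Dup': "j \<notin> D \<Longrightarrow> j \<le> i \<Longrightarrow> i \<notin> D" for i j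
      using Dup[of j "nat (i - j)"] by simp
    obtain j where j: "j \<notin> D"
    proof (rule ccontr)
      assume "\<not> thesis"
      hence allD: "\<forall>i. i \<in> D" using that by blast
      have "\<bar>u (int k)\<bar> + int k \<le> \<bar>u 0\<bar>" for k
      proof (induction k)
        case (Suc k)
        have "\<bar>u (int k + 1)\<bar> < \<bar>u (int k)\<bar>" using allD by (auto simp: D_def)
        thus ?case using Suc by (simp add: add.commute)
      qed simp
      from this[of "nat \<bar>u 0\<bar> + 1"] show False by simp
    qed
    obtain i where i: "i \<in> D"
    proof (rule ccontr)
      assume "\<not> thesis"
      hence allN: "\<forall>i. i \<notin> D" using that by blast
      have "\<bar>u (- int k)\<bar> + int k \<le> \<bar>u 0\<bar>" for k
      proof (induction k)
        case (Suc k)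
        have "\<bar>u (- int k - 1)\<bar> < \<bar>u (- int k - 1 + 1)\<bar>" using allN notD[of "- int k - 1"]
          by blast
        moreover have "- int (Suc k) = - int k - 1" by simp
        ultimately have "\<bar>u (- int (Suc k))\<bar> < \<bar>u (- int k)\<bar>" by (metis diff_add_cancel)
        thus ?case using Suc by linarith
      qed simp
      from this[of "nat \<bar>u 0\<bar> + 1"] show False by simp
    qed
    have ij: "i < j" using i j Ddown' by (metis not_less order.strict_implies_order le_less)
    define k where "k = (LEAST k::nat. i + int k \<notin> D)"
    have kex: "i + int (nat (j - i)) \<notin> D" using j ij by simp
    have k1: "i + int k \<notin> D" unfolding k_def using kex by (rule LeastI)
    have k0: "k > 0" using k1 i by (cases k) auto
    have k2: "i + int (k - 1) \<in> D" using k0 not_less_Least[of "k-1" "\<lambda>k. i + int k \<notin> D"]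
      unfolding k_def[symmetric] by auto
    define m where "m = i + int k"
    have mD: "m \<notin> D" using k1 m_def by simp
    have m1D: "m - 1 \<in> D" using k2 k0 m_def by (simp add: of_nat_diff algebra_simps)
    have dec: "\<forall>n. n < m \<longrightarrow> \<bar>u (n + 1)\<bar> < \<bar>u n\<bar>"
      using Ddown'[OF m1D] by (auto simp: D_def)
    have inc: "\<forall>n. m \<le> n \<longrightarrow> \<bar>u n\<bar> < \<bar>u (n + 1)\<bar>"
      using Dup'[OF mD] notD by auto
    have up: "\<bar>u m\<bar> < \<bar>u (m + int (Suc t))\<bar>" for t
    proof (induction t)
      case 0 thus ?case using inc by simp
    next
      case (Suc t)
      have "\<bar>u (m + int (Suc t))\<bar> < \<bar>u (m + int (Suc t) + 1)\<bar>" using inc[rule_format, of "m + int (Suc t)"] by simp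
      moreover have "m + int (Suc t) + 1 = m + int (Suc (Suc t))" by simp
      ultimately show ?case using Suc by (metis order.strict_trans)
    qed
    have down: "\<bar>u m\<bar> < \<bar>u (m - int (Suc t))\<bar>" for t
    proof (induction t)
      case 0 thus ?case using dec[rule_format, of "m - 1"] by simp
    next
      case (Suc t)
      have "\<bar>u (m - int (Suc t) - 1 + 1)\<bar> < \<bar>u (m - int (Suc t) - 1)\<bar>"
        using dec[rule_format, of "m - int (Suc t) - 1"] by simp
      moreover have "m - int (Suc t) - 1 + 1 = m - int (Suc t)" by simp
      moreover have "m - int (Suc t) - 1 = m - int (Suc (Suc t))" by simp
      ultimately show ?case using Suc by (metis order.strict_trans)
    qed
    have minp: "\<forall>n. n \<noteq> m \<longrightarrow> \<bar>u m\<bar> < \<bar>u n\<bar>"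
    proof (intro allI impI)
      fix n assume "n \<noteq> m"
      then consider "n > m" | "n < m" by linarith
      then show "\<bar>u m\<bar> < \<bar>u n\<bar>"
      proof cases
        case 1
        then show ?thesis using up[of "nat (n - m) - 1"] by simp
      next
        case 2
        then show ?thesis using down[of "nat (m - n) - 1"] by simp
      qed
    qed
    show ?thesis
    proof (rule ex1I[of _ m])
      fix m' assume h: "(\<forall>n. n \<noteq> m' \<longrightarrow> \<bar>u m'\<bar> < \<bar>u n\<bar>)
                 \<and> (\<forall>n. n < m' \<longrightarrow> \<bar>u (n + 1)\<bar> < \<bar>u n\<bar>)
                 \<and> (\<forall>n. m' \<le> n \<longrightarrow> \<bar>u n\<bar> < \<bar>u (n + 1)\<bar>)"
      show "m' = m"
      proof (rule ccontr)
        assume "m' \<noteq> m"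
        then consider "m < m'" | "m' < m" by linarith
        then show False
        proof cases
          case 1 thus False using h inc[rule_format, of m] by force
        next
          case 2 thus False using h dec[rule_format, of m'] by force
        qed
      qed
    qed (use minp dec inc in blast)
  qed
  show ?thesis using P1 P2 P3 by blast
qed

end
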